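(* Let $\mathbf{F}\in\mathbb{K}[x]^{n\times n}$ be nonsingular and column reduced with column degrees $\vec d=[d_1,\dots,d_n]$, $d_{\max}=\max_i d_i$, let $\mathbf{H}$ be its Hermite normal form, $s_i=\deg h_{ii}$, $\vec s=[s_1,\dots,s_n]$. For each $i$ let $q_i,r_i$ be the quotient and remainder of $s_i$ divided by $d_{\max}$, let $\tilde{\mathbf{E}}_i=[e_i,\,x^{s_i-q_id_{\max}}e_i,\,x^{s_i-(q_i-1)d_{\max}}e_i,\dots,x^{s_i-d_{\max}}e_i]$ ($q_i+1$ columns, $e_i$ the $i$-th column of the $n\times n$ identity), $\mathbf{E}=[\tilde{\mathbf{E}}_1,\dots,\tilde{\mathbf{E}}_n]\in\mathbb{K}[x]^{n\times\bar n}$ with $\bar n=n+\sum_i q_i$, and $\vec{s^*}=[\vec{s^*}_1,\dots,\vec{s^*}_n]\in\mathbb{Z}^{\bar n}$ with $\vec{s^*}_i=[r_i,d_{\max},\dots,d_{\max}]$ ($q_i+1$ components). Suppose $\mathbf{E}=\mathbf{F}\mathbf{Q}+\mathbf{R}$ with $\mathbf{Q},\mathbf{R}$ polynomial matrices and $\deg\mathbf{R}<d_{\max}$. Let $\vec{u^*}=[2d_{\max},\dots,2d_{\max}]\in\mathbb{Z}^n$ and let $\mathbf{N}=\begin{bmatrix}\mathbf{N}_u\\ \mathbf{N}_d\end{bmatrix}$ be a $[-\vec{u^*},-\vec{s^*}]$-minimal right kernel basis of $[\mathbf{F},-\mathbf{R}]$, where $\mathbf{N}_d$ consists of the last $\bar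 n$ rows. Let $\bar{\mathbf{N}}$ be the matrix of the columns of $\mathbf{N}_d$ whose $-\vec{s^*}$-column degrees are at most $0$. Then $\mathbf{H}$ is a column basis of $\mathbf{E}\bar{\mathbf{N}}$, and the nonzero columns of $\mathbf{E}\bar{\mathbf{N}}$ have $-\vec s$-column degree $0$.
   Context: $\mathbb{K}$ is a field. Hermite normal form of nonsingular $\mathbf{F}$: the unique $\mathbf{H}=\mathbf{F}\mathbf{U}$, $\mathbf{U}$ unimodular, lower triangular with monic diagonal entries $h_{ii}$ and $\deg h_{ij}<\deg h_{ii}$ for $j<i$. For a column vector $\mathbf{p}=[p_1,\dots,p_m]^T$ and shift $\vec t\in\mathbb{Z}^m$, $\mathrm{cdeg}_{\vec t}\,\mathbf{p}=\max_i(\deg p_i+t_i)$; for a matrix, the list of these for its columns. With $\vec c$ the column degrees of $\mathbf{P}$, $\mathbf{P}$ is column reduced if the matrix of coefficients of $x^{c_j}$ in $p_{ij}$ has full column rank, and $\vec t$-column reduced if $\mathrm{diag}(x^{t_1},\dots,x^{t_m})\mathbf{P}$ is column reduced. A right kernel basis of $\mathbf{A}$ is a full-rank $\mathbf{N}$ with $\mathbf{A}\mathbf{N}=0$ whose columns generate $\{\mathbf{q}:\mathbf{A}\mathbf{q}=0\}$ over $\mathbb{K}[x]$; it is $\vec t$-minimal if also $\vec t$-column reduced. A column basis of $\mathbf{A}$ is a full-rank matrix whose columns form a basis of the $\mathbb{K}[x]$-module generated by the columns of $\mathbf{A}$. $\deg\mathbf{R}$ is the maximum degree of the entries of $\mathbf{R}$.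 *)

theory Defs
  imports "Jordan_Normal_Form.Matrix" "Jordan_Normal_Form.Determinant"
          "HOL-Computational_Algebra.Polynomial"
begin

(* The degree of the zero
   polynomial is taken to be -infinity: zero entries are ignored in column degrees. *)

definition cdeg :: "(nat \<Rightarrow> int) \<Rightarrow> 'a::zero poly vec \<Rightarrow> int" where
  "cdeg t v = Max {int (degree (v $ i)) + t i | i. i < dim_vec v \<and> v $ i \<noteq> 0}"

definition cdeg_le :: "(nat \<Rightarrow> int) \<Rightarrow> 'a::zero poly vec \<Rightarrow> int \<Rightarrow> bool" where
  "cdeg_le t v k \<longleftrightarrow> (\<forall>i < dim_vec v. v $ i \<noteq> 0 \<longrightarrow> int (degree (v $ i)) + t i \<le> k)"

definition full_col_rank :: "'b::comm_ring_1 mat \<Rightarrow> bool" where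
  "full_col_rank A \<longleftrightarrow> (\<forall>v \<in> carrier_vec (dim_col A). A *\<^sub>v v = 0\<^sub>v (dim_row A) \<longrightarrow> v = 0\<^sub>v (dim_col A))"

text \<open>Leading coefficient matrix of diag(x^t) P w.r.t. its column degrees:
  entry (i,j) is the coefficient of x^(c_j - t_i) in p_ij, c_j = cdeg_t (col j).\<close>
definition lead_mat :: "(nat \<Rightarrow> int) \<Rightarrow> 'a::zero poly mat \<Rightarrow> 'a mat" where
  "lead_mat t P = mat (dim_row P) (dim_col P)
     (\<lambda>(i,j). let e = cdeg t (col P j) - t i in if 0 \<le> e then coeff (P $$ (i,j)) (nat e) else 0)"

definition shifted_col_reduced :: "(nat \<Rightarrow> int) \<Rightarrow> 'a::field poly mat \<Rightarrow> bool" where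
  "shifted_col_reduced t P \<longleftrightarrow> full_col_rank (lead_mat t P)"

definition col_reduced :: "'a::field poly mat \<Rightarrow> bool" where
  "col_reduced P \<longleftrightarrow> shifted_col_reduced (\<lambda>_. 0) P"

definition nonsingular :: "'a::field poly mat \<Rightarrow> bool" where
  "nonsingular F \<longleftrightarrow> F \<in> carrier_mat (dim_row F) (dim_row F) \<and> det F \<noteq> 0"

definition unimodular :: "'a::field poly mat \<Rightarrow> bool" where
  "unimodular U \<longleftrightarrow> U \<in> carrier_mat (dim_row U) (dim_row U) \<and> is_unit (det U)"

definition is_hermite_nf :: "'a::field poly mat \<Rightarrow> 'a poly mat \<Rightarrow> bool" where
  "is_hermite_nf F H \<longleftrightarrow> (\<exists>U. unimodular U \<and> dim_row U = dim_col F \<and> H = F * U) \<and>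
     (\<forall>i < dim_row H. \<forall>j < dim_col H. i < j \<longrightarrow> H $$ (i,j) = 0) \<and>
     (\<forall>i < dim_row H. lead_coeff (H $$ (i,i)) = 1) \<and>
     (\<forall>i < dim_row H. \<forall>j < i. H $$ (i,j) \<noteq> 0 \<longrightarrow> degree (H $$ (i,j)) < degree (H $$ (i,i)))"

definition right_kernel_basis :: "'a::field poly mat \<Rightarrow> 'a poly mat \<Rightarrow> bool" where
  "right_kernel_basis A N \<longleftrightarrow> dim_row N = dim_col A \<and> full_col_rank N \<and>
     A * N = 0\<^sub>m (dim_row A) (dim_col N) \<and>
     (\<forall>q \<in> carrier_vec (dim_col A). A *\<^sub>v q = 0\<^sub>v (dim_row A) \<longrightarrow>
        (\<exists>c \<in> carrier_vec (dim_col N). q = N *\<^sub>v c))"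

definition minimal_kernel_basis :: "(nat \<Rightarrow> int) \<Rightarrow> 'a::field poly mat \<Rightarrow> 'a poly mat \<Rightarrow> bool" where
  "minimal_kernel_basis t A N \<longleftrightarrow> right_kernel_basis A N \<and> shifted_col_reduced t N"

definition column_basis :: "'a::field poly mat \<Rightarrow> 'a poly mat \<Rightarrow> bool" where
  "column_basis A B \<longleftrightarrow> dim_row B = dim_row A \<and> full_col_rank B \<and>
     (\<forall>c \<in> carrier_vec (dim_col A). \<exists>c' \<in> carrier_vec (dim_col B). A *\<^sub>v c = B *\<^sub>v c') \<and>
     (\<forall>c' \<in> carrier_vec (dim_col B). \<exists>c \<in> carrier_vec (dim_col A). B *\<^sub>v c' = A *\<^sub>v c)"

definition col_degs :: "'a::zero poly mat \<Rightarrow> nat \<Rightarrow> int" where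
  "col_degs F j = cdeg (\<lambda>_. 0) (col F j)"

definition dmax :: "'a::zero poly mat \<Rightarrow> nat" where
  "dmax F = nat (Max {col_degs F j | j. j < dim_col F})"

text \<open>Description of the columns of E: list of (row index i, polynomial entry, shift s*).
  Block i is [e_i, x^(s_i - q_i d) e_i, x^(s_i-(q_i-1)d) e_i, ..., x^(s_i - d) e_i]
  with shifts [r_i, d, ..., d], where s_i = deg h_ii, q_i = s_i div d, r_i = s_i mod d.\<close>
definition E_cols :: "nat \<Rightarrow> (nat \<Rightarrow> nat) \<Rightarrow> nat \<Rightarrow> (nat \<times> 'a::comm_ring_1 poly \<times> int) list" where
  "E_cols n s d = concat (map (\<lambda>i. (i, 1, int (s i mod d)) #
       map (\<lambda>k. (i, monom 1 (s i - (s i div d - k) * d), int d)) [0..<s i div d]) [0..<n])"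

definition E_mat :: "nat \<Rightarrow> (nat \<Rightarrow> nat) \<Rightarrow> nat \<Rightarrow> 'a::comm_ring_1 poly mat" where
  "E_mat n s d = (let cs = E_cols n s d in
     mat n (length cs) (\<lambda>(a,j). if a = fst (cs ! j) then fst (snd (cs ! j)) else 0))"

definition s_star :: "nat \<Rightarrow> (nat \<Rightarrow> nat) \<Rightarrow> nat \<Rightarrow> nat \<Rightarrow> int" where
  "s_star n s d j = concat (map (\<lambda>i. int (s i mod d) # replicate (s i div d) (int d)) [0..<n]) ! j"

definition hcat :: "'b::zero mat \<Rightarrow> 'b mat \<Rightarrow> 'b mat" where
  "hcat A B = mat (dim_row A) (dim_col A + dim_col B)
     (\<lambda>(i,j). if j < dim_col A then A $$ (i,j) else B $$ (i, j - dim_col A))"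

definition bottom_rows :: "nat \<Rightarrow> 'b mat \<Rightarrow> 'b mat" where
  "bottom_rows k N = mat (dim_row N - k) (dim_col N) (\<lambda>(i,j). N $$ (i + k, j))"

definition select_cols :: "('b vec \<Rightarrow> bool) \<Rightarrow> 'b mat \<Rightarrow> 'b mat" where
  "select_cols P N = (let J = filter (\<lambda>j. P (col N j)) [0..<dim_col N] in
     mat (dim_row N) (length J) (\<lambda>(i,k). N $$ (i, J ! k)))"

end

theory Submission
  imports Defs
begin


lemma coeff_mult_bound:
  fixes p q :: "'a::comm_semiring_0 poly"
  assumes "degree p \<le> A" "degree q \<le> B"
  shows "coeff (p*q) (A+B) = coeff p A * coeff q B"
proof -
  have "coeff (p*q) (A+B) = (\<Sum>x\<le>A+B. coeff p x * coeff q (A+B-x))" by (rule coeff_mult)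
  also have "\<dots> = (\<Sum>x\<le>A+B. if x = A then coeff p A * coeff q B else 0)"
  proof (rule sum.cong[OF refl])
    fix x assume "x \<in> {..A+B}"
    show "coeff p x * coeff q (A + B - x) = (if x = A then coeff p A * coeff q B else 0)"
    proof (cases "x = A")
      case False
      show ?thesis
      proof (cases "x < A")
        case True
        then have "A+B-x > B" by simp
        then have "coeff q (A+B-x) = 0" using assms(2) by (intro coeff_eq_0) simp
        then show ?thesis using False by simp
      next
        case False
        then have "x > A" using \<open>x \<noteq> A\<close> by simp
        then have "coeff p x = 0" using assms(1) by (intro coeff_eq_0) simp
        then show ?thesis using \<open>x \<noteq> A\<close> by simp
      qed
    qed simp
  qed
  also have "\<dots> = coeff p A * coeff q B" by simp
  finally show ?thesis .
qed

lemma cdeg_ge: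
  assumes "i < dim_vec v" "v $ i \<noteq> 0"
  shows "int (degree (v $ i)) + t i \<le> cdeg t v"
  unfolding cdeg_def
proof (rule Max_ge)
  have "{int (degree (v $ i)) + t i |i. i < dim_vec v \<and> v $ i \<noteq> 0} \<subseteq> (\<lambda>i. int (degree (v $ i)) + t i) ` {..<dim_vec v}"
    by auto
  then show "finite {int (degree (v $ i)) + t i |i. i < dim_vec v \<and> v $ i \<noteq> 0}"
    by (rule finite_subset) simp
qed (use assms in auto)

lemma cdeg_finite:
  "finite {int (degree (v $ i)) + t i |i. i < dim_vec v \<and> v $ i \<noteq> 0}"
proof -
  have "{int (degree (v $ i)) + t i |i. i < dim_vec v \<and> v $ i \<noteq> 0} \<subseteq> (\<lambda>i. int (degree (v $ i)) + t i) ` {..<dim_vec v}"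
    by auto
  then show ?thesis by (rule finite_subset) simp
qed

lemma red_col_nonzero:
  assumes red: "shifted_col_reduced t N" and j: "j < dim_col N"
  shows "\<exists>i < dim_row N. N $$ (i,j) \<noteq> 0"
proof (rule ccontr)
  assume "\<not> ?thesis"
  then have z: "\<And>i. i < dim_row N \<Longrightarrow> N $$ (i,j) = 0" by auto
  let ?L = "lead_mat t N"
  have dims: "dim_row ?L = dim_row N" "dim_col ?L = dim_col N" by (simp_all add: lead_mat_def)
  have "?L *\<^sub>v unit_vec (dim_col N) j = 0\<^sub>v (dim_row ?L)"
  proof (rule eq_vecI)
    fix i assume i: "i < dim_vec (0\<^sub>v (dim_row ?L))"
    then have i': "i < dim_row N" using dims by simp
    have "(?L *\<^sub>v unit_vec (dim_col N) j) $ i = row ?L i \<bullet> unit_vec (dim_col N) j"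
      using i' dims by simp
    also have "\<dots> = ?L $$ (i,j)"
      using j i' dims by (subst scalar_prod_right_unit[of _ "dim_col N"]) auto
    also have "\<dots> = 0" using z[OF i'] i' j by (simp add: lead_mat_def Let_def)
    finally show "(?L *\<^sub>v unit_vec (dim_col N) j) $ i = 0\<^sub>v (dim_row ?L) $ i" using i by simp
  qed simp
  moreover have "unit_vec (dim_col N) j \<noteq> 0\<^sub>v (dim_col ?L)"
    using j dims by (metis index_unit_vec(1) index_zero_vec(1) zero_neq_one)
  ultimately show False using red dims
    unfolding shifted_col_reduced_def full_col_rank_def by auto
qed

lemma lead_mat_entry:
  "i < dim_row N \<Longrightarrow> j < dim_col N \<Longrightarrow> lead_mat t N $$ (i,j) =
    (if 0 \<le> cdeg t (col N j) - t i then coeff (N $$ (i,j)) (nat (cdeg t (col N j) - t i)) else 0)"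
  by (simp add: lead_mat_def Let_def)

lemma mat_vec_entry: "i < dim_row A \<Longrightarrow> dim_vec v = dim_col A \<Longrightarrow>
   (A *\<^sub>v v) $ i = (\<Sum>j<dim_col A. A $$ (i,j) * v $ j)"
  by (simp add: scalar_prod_def atLeast0LessThan)

lemma pred_deg:
  fixes N :: "'a::field poly mat"
  assumes red: "shifted_col_reduced t N" and c: "c \<in> carrier_vec (dim_col N)"
    and le: "cdeg_le t (N *\<^sub>v c) k" and j: "j < dim_col N" and cj: "c $ j \<noteq> 0"
  shows "int (degree (c $ j)) + cdeg t (col N j) \<le> k"
proof (rule ccontr)
  assume contra: "\<not> ?thesis"
  define cd where "cd = (\<lambda>j. cdeg t (col N j))"
  define JS where "JS = {j. j < dim_col N \<and> c $ j \<noteq> 0}"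
  define \<delta> where "\<delta> = Max ((\<lambda>j. int (degree (c $ j)) + cd j) ` JS)"
  have finJ: "finite JS" unfolding JS_def by simp
  have jJ: "j \<in> JS" using j cj unfolding JS_def by simp
  have geD: "\<And>j. j \<in> JS \<Longrightarrow> int (degree (c $ j)) + cd j \<le> \<delta>"
    unfolding \<delta>_def using finJ by (intro Max_ge) auto
  have dk: "\<delta> > k" using geD[OF jJ] contra unfolding cd_def by simp
  obtain j0 where j0: "j0 \<in> JS" "int (degree (c $ j0)) + cd j0 = \<delta>"
  proof -
    have "\<delta> \<in> (\<lambda>j. int (degree (c $ j)) + cd j) ` JS"
      unfolding \<delta>_def using finJ jJ by (intro Max_in) auto
    then show ?thesis using that by auto
  qed
  define w where "w = vec (dim_col N) (\<lambda>j. if 0 \<le> \<delta> - cd j then coeff (c$j) (nat (\<delta> - cd j)) else 0)"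
  let ?L = "lead_mat t N"
  have dimsL: "dim_row ?L = dim_row N" "dim_col ?L = dim_col N" by (simp_all add: lead_mat_def)
  have F1: "int (degree (N $$ (i,j))) + t i \<le> cd j"
    if "i < dim_row N" "j < dim_col N" "N $$ (i,j) \<noteq> 0" for i j
    using cdeg_ge[of i "col N j" t] that unfolding cd_def by simp
  have F2: "int (degree (c $ j)) \<le> \<delta> - cd j" if "j < dim_col N" "c $ j \<noteq> 0" for j
    using geD[of j] that unfolding JS_def by simp
  have wj0: "w $ j0 \<noteq> 0"
  proof -
    have "\<delta> - cd j0 = int (degree (c $ j0))" using j0 by simp
    moreover have "j0 < dim_col N" "c $ j0 \<noteq> 0" using j0 unfolding JS_def by auto
    ultimately show ?thesis unfolding w_def by simp
  qed
  have key1: "coeff (N $$ (i,j) * c $ j) (nat (\<delta> - t i)) = ?L $$ (i,j) * w $ j"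
    if ij: "i < dim_row N" "j < dim_col N" and e: "0 \<le> \<delta> - t i" for i j
  proof -
    have Lij: "?L $$ (i,j) = (if 0 \<le> cd j - t i then coeff (N $$ (i,j)) (nat (cd j - t i)) else 0)"
      using lead_mat_entry[OF ij] unfolding cd_def .
    have wj: "w $ j = (if 0 \<le> \<delta> - cd j then coeff (c$j) (nat (\<delta> - cd j)) else 0)"
      using ij unfolding w_def by simp
    show ?thesis
    proof (cases "0 \<le> cd j - t i")
      case False
      then have "N $$ (i,j) = 0" using F1[OF ij] by fastforce
      then show ?thesis using Lij False by simp
    next
      case a: True
      show ?thesis
      proof (cases "0 \<le> \<delta> - cd j")
        case False
        then have "c $ j = 0" using F2[OF ij(2)] by fastforce
        then show ?thesis using wj False by simp
      next
        case b: True
        have "degree (N $$ (i,j)) \<le> nat (cd j - t i)"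
          using F1[OF ij] by (cases "N $$ (i,j) = 0") auto
        moreover have "degree (c $ j) \<le> nat (\<delta> - cd j)"
          using F2[OF ij(2)] by (cases "c $ j = 0") auto
        moreover have "nat (\<delta> - t i) = nat (cd j - t i) + nat (\<delta> - cd j)" using a b by simp
        ultimately show ?thesis using Lij wj a b by (simp add: coeff_mult_bound)
      qed
    qed
  qed
  have key2: "?L $$ (i,j) * w $ j = 0"
    if ij: "i < dim_row N" "j < dim_col N" and e: "\<delta> - t i < 0" for i j
  proof -
    have Lij: "?L $$ (i,j) = (if 0 \<le> cd j - t i then coeff (N $$ (i,j)) (nat (cd j - t i)) else 0)"
      using lead_mat_entry[OF ij] unfolding cd_def .
    have wj: "w $ j = (if 0 \<le> \<delta> - cd j then coeff (c$j) (nat (\<delta> - cd j)) else 0)"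
      using ij unfolding w_def by simp
    show ?thesis using Lij wj e by auto
  qed
  have wc: "w \<in> carrier_vec (dim_col ?L)" using dimsL unfolding w_def by simp
  have wnz: "w \<noteq> 0\<^sub>v (dim_col ?L)"
  proof
    assume "w = 0\<^sub>v (dim_col ?L)"
    then have "w $ j0 = 0" using j0 dimsL unfolding JS_def by auto
    then show False using wj0 by simp
  qed
  have "?L *\<^sub>v w \<noteq> 0\<^sub>v (dim_row ?L)"
    using red wc wnz unfolding shifted_col_reduced_def full_col_rank_def by blast
  then obtain i where i: "i < dim_row N" and Lwi: "(?L *\<^sub>v w) $ i \<noteq> 0"
    using dimsL by (metis dim_mult_mat_vec eq_vecI index_zero_vec(1) index_zero_vec(2))
  have Lw: "(?L *\<^sub>v w) $ i = (\<Sum>j<dim_col N. ?L $$ (i,j) * w $ j)"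
    using mat_vec_entry[of i ?L w] i dimsL wc by simp
  have e: "0 \<le> \<delta> - t i"
  proof (rule ccontr)
    assume "\<not> 0 \<le> \<delta> - t i"
    then have "(\<Sum>j<dim_col N. ?L $$ (i,j) * w $ j) = 0"
      using key2[OF i] by (intro sum.neutral) (simp add: not_le)
    then show False using Lw Lwi by simp
  qed
  have "coeff ((N *\<^sub>v c) $ i) (nat (\<delta> - t i)) = (\<Sum>j<dim_col N. coeff (N $$ (i,j) * c $ j) (nat (\<delta> - t i)))"
    using mat_vec_entry[of i N c] i c by (simp add: coeff_sum)
  also have "\<dots> = (\<Sum>j<dim_col N. ?L $$ (i,j) * w $ j)"
    using key1[OF i _ e] by simp
  finally have cf: "coeff ((N *\<^sub>v c) $ i) (nat (\<delta> - t i)) \<noteq> 0" using Lw Lwi by simp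
  then have nz: "(N *\<^sub>v c) $ i \<noteq> 0" by auto
  have "nat (\<delta> - t i) \<le> degree ((N *\<^sub>v c) $ i)" using cf by (rule le_degree)
  moreover have "int (degree ((N *\<^sub>v c) $ i)) + t i \<le> k"
    using le nz i unfolding cdeg_le_def by simp
  ultimately show False using dk e by linarith
qed




lemma E_cols_set:
  assumes "(i,p,sh) \<in> set (E_cols n s d :: (nat \<times> 'a::field poly \<times> int) list)"
  shows "i < n \<and> p \<noteq> 0 \<and> int (degree p) + sh \<le> int (s i) \<and> 0 \<le> sh \<and> (0 < d \<longrightarrow> sh \<le> int d)"
proof -
  from assms obtain i' where i': "i' < n" and mem:
    "(i,p,sh) \<in> set ((i', 1, int (s i' mod d)) #
       map (\<lambda>k. (i', monom 1 (s i' - (s i' div d - k) * d), int d)) [0..<s i' div d])"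
    unfolding E_cols_def by auto
  show ?thesis
  proof (cases "(i,p,sh) = (i', 1, int (s i' mod d))")
    case True
    then show ?thesis using i' by (auto simp: less_imp_le)
  next
    case False
    with mem obtain k where k: "k < s i' div d" and eq: "(i,p,sh) = (i', monom 1 (s i' - (s i' div d - k) * d), int d)"
      by auto
    have "1 \<le> s i' div d - k" using k by simp
    then have "1 * d \<le> (s i' div d - k) * d" by (intro mult_right_mono) auto
    then have A1: "d \<le> (s i' div d - k) * d" by simp
    have A2: "(s i' div d - k) * d \<le> (s i' div d) * d" by (intro mult_right_mono) auto
    have A3: "(s i' div d) * d \<le> s i'" by simp
    have "degree (monom (1::'a) (s i' - (s i' div d - k) * d)) = s i' - (s i' div d - k) * d"
      by (simp add: degree_monom_eq)
    then have "degree (monom (1::'a) (s i' - (s i' div d - k) * d)) + d \<le> s i'"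
      using A1 A2 A3 by linarith
    then show ?thesis using eq i' by auto
  qed
qed

lemma E_cols_length: "length (E_cols n s d) = n + (\<Sum>i<n. s i div d)"
  by (induct n) (simp_all add: E_cols_def)

lemma s_star_eq: "k < length (E_cols n s d :: (nat \<times> 'a::comm_ring_1 poly \<times> int) list) \<Longrightarrow> s_star n s d k = snd (snd ((E_cols n s d :: (nat \<times> 'a poly \<times> int) list) ! k))"
proof -
  assume k: "k < length (E_cols n s d :: (nat \<times> 'a::comm_ring_1 poly \<times> int) list)"
  have "map (snd \<circ> snd) (E_cols n s d :: (nat \<times> 'a::comm_ring_1 poly \<times> int) list) = concat (map (\<lambda>i. int (s i mod d) # replicate (s i div d) (int d)) [0..<n])"
    by (simp add: E_cols_def map_concat comp_def map_replicate_const)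
  then show ?thesis unfolding s_star_def using k by (metis comp_apply length_map nth_map)
qed

lemma E_mat_carrier: "(E_mat n s d :: 'a::comm_ring_1 poly mat) \<in> carrier_mat n (n + (\<Sum>i<n. s i div d))"
  using E_cols_length[of n s d, where 'a='a] by (simp add: E_mat_def Let_def)

lemma E_mat_entry:
  fixes cs :: "(nat \<times> 'a::comm_ring_1 poly \<times> int) list"
  assumes "cs = E_cols n s d" "a < n" "k < length cs"
  shows "(E_mat n s d :: 'a poly mat) $$ (a,k) = (if a = fst (cs ! k) then fst (snd (cs ! k)) else 0)"
  using assms unfolding E_mat_def Let_def by (subst index_mat) auto

lemma mono_col:
  assumes i: "i < n" and m: "m \<le> s i"
  shows "\<exists>e sh. (i, monom 1 e, sh) \<in> set (E_cols n s d :: (nat \<times> 'a::field poly \<times> int) list) \<and> e \<le> m \<and> int (m - e) \<le> sh"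
proof -
  define r where "r = s i mod d"
  define q where "q = s i div d"
  have sdec: "s i = q * d + r" unfolding q_def r_def by simp
  have blk: "set ((i, 1::'a poly, int r) # map (\<lambda>k. (i, monom 1 (s i - (q - k) * d), int d)) [0..<q])
      \<subseteq> set (E_cols n s d)"
    unfolding E_cols_def r_def q_def using i by auto
  show ?thesis
  proof (cases "m \<le> r")
    case True
    have "(i, monom 1 0, int r) \<in> set (E_cols n s d :: (nat \<times> 'a::field poly \<times> int) list)"
      using blk by (auto simp: monom_0 one_pCons)
    then show ?thesis using True by (intro exI[of _ 0] exI[of _ "int r"]) auto
  next
    case False
    then have d0: "d > 0" using m unfolding r_def by (cases "d = 0") auto
    have q0: "q \<ge> 1"
    proof (rule ccontr)
      assume "\<not> q \<ge> 1" then have "q = 0" by simp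
      then show False using sdec m False by simp
    qed
    define kk where "kk = min (q - 1) ((m - r) div d)"
    have kkq: "kk < q" unfolding kk_def using q0 by simp
    have sub: "(q - kk) * d + kk * d = q * d" using kkq by (simp add: add_mult_distrib[symmetric])
    define e where "e = s i - (q - kk) * d"
    have e_eq: "e = r + kk * d" unfolding e_def using sdec sub by linarith
    have mem: "(i, monom 1 e, int d) \<in> set (E_cols n s d :: (nat \<times> 'a::field poly \<times> int) list)"
      using blk kkq unfolding e_def by auto
    have "kk * d \<le> ((m - r) div d) * d" unfolding kk_def by (intro mult_right_mono) auto
    also have "\<dots> \<le> m - r" by (simp add: div_times_less_eq_dividend)
    finally have em: "e \<le> m" using e_eq False by linarith
    have "m - e \<le> d"
    proof (cases "(m - r) div d \<le> q - 1")
      case True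
      then have "kk = (m - r) div d" unfolding kk_def by simp
      then have "kk * d = (m - r) div d * d" by simp
      moreover have "m - r = ((m - r) div d) * d + (m - r) mod d" by simp
      moreover have "(m - r) mod d < d" using d0 by simp
      ultimately show ?thesis using e_eq False by linarith
    next
      case F2: False
      then have "kk = q - 1" unfolding kk_def by simp
      have "q * d \<le> ((m - r) div d) * d" using F2 by (intro mult_right_mono) auto
      also have "\<dots> \<le> m - r" by (simp add: div_times_less_eq_dividend)
      finally have "m = s i" using sdec m False by linarith
      have "(q - 1) * d + d = q * d" using q0 by (cases q) auto
      moreover have "kk * d = (q - 1) * d" using \<open>kk = q - 1\<close> by simp
      ultimately show ?thesis using \<open>m = s i\<close> e_eq sdec by linarith
    qed
    then show ?thesis using mem em by (intro exI[of _ e] exI[of _ "int d"]) auto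
  qed
qed




lemma s_star_nonneg:
  assumes "k < n + (\<Sum>i<n. s i div d)" shows "0 \<le> s_star n s d k"
proof -
  let ?L = "concat (map (\<lambda>i. int (s i mod d) # replicate (s i div d) (int d)) [0..<n])"
  have L: "length ?L = n + (\<Sum>i<n. s i div d)" by (induct n) auto
  have "?L ! k \<in> set ?L" using assms L by (intro nth_mem) simp
  then show ?thesis unfolding s_star_def by auto
qed

lemma cdeg_le_nonneg_iff:
  assumes "\<And>i. i < dim_vec v \<Longrightarrow> 0 \<le> sh i"
  shows "cdeg_le (\<lambda>i. - sh i) v 0 \<longleftrightarrow> (\<forall>i<dim_vec v. int (degree (v $ i)) \<le> sh i)"
  unfolding cdeg_le_def
proof (intro iffI allI impI)
  fix i assume H: "\<forall>i<dim_vec v. v $ i \<noteq> 0 \<longrightarrow> int (degree (v $ i)) + - sh i \<le> 0" and i: "i < dim_vec v"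
  show "int (degree (v $ i)) \<le> sh i"
  proof (cases "v $ i = 0")
    case True then show ?thesis using assms[OF i] by simp
  next
    case False then show ?thesis using H i by fastforce
  qed
next
  fix i assume H: "\<forall>i<dim_vec v. int (degree (v $ i)) \<le> sh i" and i: "i < dim_vec v" "v $ i \<noteq> 0"
  then show "int (degree (v $ i)) + - sh i \<le> 0" by fastforce
qed

lemma mat_vec_zero: "A *\<^sub>v 0\<^sub>v (dim_col A) = 0\<^sub>v (dim_row A)"
  by (intro eq_vecI) (auto intro!: scalar_prod_right_zero)

lemma E_deg:
  fixes v :: "'a::field poly vec"
  assumes v: "v \<in> carrier_vec (n + (\<Sum>i<n. s i div d))"
    and vd: "\<forall>k < n + (\<Sum>i<n. s i div d). int (degree (v $ k)) \<le> s_star n s d k"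
    and a: "a < n"
  shows "degree ((E_mat n s d *\<^sub>v v) $ a) \<le> s a"
proof -
  let ?cs = "E_cols n s d :: (nat \<times> 'a poly \<times> int) list"
  let ?nb = "n + (\<Sum>i<n. s i div d)"
  let ?E = "E_mat n s d :: 'a poly mat"
  have len: "length ?cs = ?nb" by (rule E_cols_length)
  have Ec: "?E \<in> carrier_mat n ?nb" by (rule E_mat_carrier)
  have "(?E *\<^sub>v v) $ a = (\<Sum>k<?nb. ?E $$ (a,k) * v $ k)"
    using mat_vec_entry[of a ?E v] Ec v a by auto
  also have "degree \<dots> \<le> s a"
  proof (rule degree_sum_le)
    fix k assume "k \<in> {..<?nb}"
    then have k: "k < ?nb" by simp
    have kl: "k < length ?cs" using len k by simp
    show "degree (?E $$ (a,k) * v $ k) \<le> s a"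
    proof (cases "a = fst (?cs ! k)")
      case False
      then show ?thesis using E_mat_entry[OF refl a kl] by simp
    next
      case True
      obtain i p sh where cs: "?cs ! k = (i,p,sh)" by (metis prod.collapse)
      have "(i,p,sh) \<in> set ?cs" using cs k len by (metis nth_mem)
      from E_cols_set[OF this] have pb: "int (degree p) + sh \<le> int (s i)" by simp
      have ia: "i = a" using True cs by simp
      have Eak: "?E $$ (a,k) = p" using E_mat_entry[OF refl a kl] True cs by simp
      have "sh = s_star n s d k" using s_star_eq[OF kl] cs by simp
      then have "int (degree (v $ k)) \<le> sh" using vd k by simp
      then have "int (degree p + degree (v $ k)) \<le> int (s a)" using pb ia by simp
      then have "degree p + degree (v $ k) \<le> s a" by linarith
      moreover have "degree (?E $$ (a,k) * v $ k) \<le> degree p + degree (v $ k)"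
        unfolding Eak by (rule degree_mult_le)
      ultimately show ?thesis by linarith
    qed
  qed simp
  finally show ?thesis .
qed

definition reach :: "nat \<Rightarrow> (nat \<Rightarrow> nat) \<Rightarrow> nat \<Rightarrow> 'a::field poly vec \<Rightarrow> bool" where
  "reach n s d y \<longleftrightarrow> y \<in> carrier_vec n \<and> (\<exists>v \<in> carrier_vec (n + (\<Sum>i<n. s i div d)).
      E_mat n s d *\<^sub>v v = y \<and> (\<forall>k < n + (\<Sum>i<n. s i div d). int (degree (v $ k)) \<le> s_star n s d k))"

lemma reach_zero: "reach n s d (0\<^sub>v n)"
proof -
  let ?nb = "n + (\<Sum>i<n. s i div d)"
  have Ec: "(E_mat n s d :: 'a poly mat) \<in> carrier_mat n ?nb" by (rule E_mat_carrier)
  have "(E_mat n s d :: 'a poly mat) *\<^sub>v 0\<^sub>v ?nb = 0\<^sub>v n" using mat_vec_zero[of "E_mat n s d :: 'a poly mat"] Ec by simp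
  moreover have "\<forall>k<?nb. int (degree ((0\<^sub>v ?nb :: 'a poly vec) $ k)) \<le> s_star n s d k"
    using s_star_nonneg by simp
  moreover have "0\<^sub>v ?nb \<in> carrier_vec ?nb" by simp
  moreover have "(0\<^sub>v n :: 'a poly vec) \<in> carrier_vec n" by simp
  ultimately show ?thesis unfolding reach_def by blast
qed

lemma reach_add:
  assumes "reach n s d (y :: 'a::field poly vec)" "reach n s d y'"
  shows "reach n s d (y + y')"
proof -
  let ?nb = "n + (\<Sum>i<n. s i div d)"
  have Ec: "(E_mat n s d :: 'a poly mat) \<in> carrier_mat n ?nb" by (rule E_mat_carrier)
  from assms obtain v v' where v: "v \<in> carrier_vec ?nb" "E_mat n s d *\<^sub>v v = y" "\<forall>k<?nb. int (degree (v $ k)) \<le> s_star n s d k"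
    and v': "v' \<in> carrier_vec ?nb" "E_mat n s d *\<^sub>v v' = y'" "\<forall>k<?nb. int (degree (v' $ k)) \<le> s_star n s d k"
    and y: "y \<in> carrier_vec n" "y' \<in> carrier_vec n"
    unfolding reach_def by blast
  have 1: "E_mat n s d *\<^sub>v (v + v') = y + y'" using mult_add_distrib_mat_vec[OF Ec v(1) v'(1)] v(2) v'(2) by simp
  have 2: "\<forall>k<?nb. int (degree ((v + v') $ k)) \<le> s_star n s d k"
  proof (intro allI impI)
    fix k assume k: "k < ?nb"
    have a: "int (degree (v $ k)) \<le> s_star n s d k" using v(3) k by blast
    have b: "int (degree (v' $ k)) \<le> s_star n s d k" using v'(3) k by blast
    have e: "(v + v') $ k = v $ k + v' $ k" using k v'(1) by simp
    have "degree (v $ k + v' $ k) \<le> max (degree (v $ k)) (degree (v' $ k))"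
      by (rule degree_add_le_max)
    then have "int (degree (v $ k + v' $ k)) \<le> max (int (degree (v $ k))) (int (degree (v' $ k)))"
      by linarith
    then show "int (degree ((v + v') $ k)) \<le> s_star n s d k" unfolding e using a b by (simp add: max_def split: if_splits)
  qed
  have 3: "v + v' \<in> carrier_vec ?nb" using v(1) v'(1) by simp
  have 4: "y + y' \<in> carrier_vec n" using y by simp
  show ?thesis unfolding reach_def using 1 2 3 4 by blast
qed

lemma reach_sum:
  assumes "finite S" "\<And>x. x \<in> S \<Longrightarrow> reach n s d (vec n (g x) :: 'a::field poly vec)"
  shows "reach n s d (vec n (\<lambda>a. \<Sum>x\<in>S. g x a) :: 'a poly vec)"
  using assms
proof (induction S rule: finite_induct)
  case empty
  have "vec n (\<lambda>a. \<Sum>x\<in>{}. g x a) = (0\<^sub>v n :: 'a poly vec)" by (auto simp: zero_vec_def)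
  then show ?case using reach_zero[of n s d] by simp
next
  case (insert x S)
  have eq: "vec n (\<lambda>a. \<Sum>x\<in>insert x S. g x a) = vec n (g x) + vec n (\<lambda>a. \<Sum>x\<in>S. g x a)"
    using insert(1,2) by (intro eq_vecI) auto
  have r1: "reach n s d (vec n (g x) :: 'a poly vec)" using insert(4) by simp
  have r2: "reach n s d (vec n (\<lambda>a. \<Sum>x\<in>S. g x a) :: 'a poly vec)" using insert(3,4) by simp
  show ?case unfolding eq by (rule reach_add[OF r1 r2])
qed




lemma reach_monom:
  assumes i: "i < n" and m: "m \<le> s i"
  shows "reach n s d (vec n (\<lambda>a. if a = i then monom c m else 0) :: 'a::field poly vec)"
proof -
  let ?cs = "E_cols n s d :: (nat \<times> 'a poly \<times> int) list"
  let ?nb = "n + (\<Sum>i<n. s i div d)"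
  let ?E = "E_mat n s d :: 'a poly mat"
  have len: "length ?cs = ?nb" by (rule E_cols_length)
  have Ec: "?E \<in> carrier_mat n ?nb" by (rule E_mat_carrier)
  obtain e sh where mem: "(i, monom 1 e, sh) \<in> set ?cs" and em: "e \<le> m" "int (m - e) \<le> sh"
    using mono_col[of i n m s d] i m by blast
  obtain k where k: "k < length ?cs" and csk: "?cs ! k = (i, monom 1 e, sh)"
    using mem by (metis in_set_conv_nth)
  have kn: "k < ?nb" using k len by simp
  define v where "v = vec ?nb (\<lambda>l. if l = k then monom c (m - e) else 0)"
  have vc: "v \<in> carrier_vec ?nb" unfolding v_def by simp
  have ssk: "s_star n s d k = sh" using s_star_eq[OF k] csk by simp
  have vd: "\<forall>l<?nb. int (degree (v $ l)) \<le> s_star n s d l"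
  proof (intro allI impI)
    fix l assume l: "l < ?nb"
    show "int (degree (v $ l)) \<le> s_star n s d l"
    proof (cases "l = k")
      case True
      have "degree (monom c (m - e)) \<le> m - e" by (rule degree_monom_le)
      then show ?thesis using True l em ssk unfolding v_def by simp
    next
      case False
      then show ?thesis using l s_star_nonneg[OF l] unfolding v_def by simp
    qed
  qed
  have "?E *\<^sub>v v = vec n (\<lambda>a. if a = i then monom c m else 0)"
  proof (rule eq_vecI)
    fix a assume "a < dim_vec (vec n (\<lambda>a. if a = i then monom c m else 0))"
    then have a: "a < n" by simp
    have "(?E *\<^sub>v v) $ a = (\<Sum>l<?nb. ?E $$ (a,l) * v $ l)"
      using mat_vec_entry[of a ?E v] Ec vc a by auto
    also have "\<dots> = (\<Sum>l<?nb. if l = k then ?E $$ (a,k) * monom c (m - e) else 0)"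
      unfolding v_def by (intro sum.cong) auto
    also have "\<dots> = ?E $$ (a,k) * monom c (m - e)" using kn by simp
    also have "\<dots> = (if a = i then monom c m else 0)"
      using E_mat_entry[OF refl a k] csk em by (simp add: mult_monom)
    finally show "(?E *\<^sub>v v) $ a = vec n (\<lambda>a. if a = i then monom c m else 0) $ a" using a by simp
  qed (use Ec in simp)
  then show ?thesis unfolding reach_def using vc vd by (intro conjI bexI[of _ v]) auto
qed

lemma reach_row:
  assumes i: "i < n" and p: "degree p \<le> s i"
  shows "reach n s d (vec n (\<lambda>a. if a = i then p else 0) :: 'a::field poly vec)"
proof -
  have "reach n s d (vec n (\<lambda>a. \<Sum>m\<in>{..s i}. (\<lambda>m a. if a = i then monom (coeff p m) m else 0) m a) :: 'a poly vec)"
    by (rule reach_sum) (use reach_monom[OF i] in auto)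
  moreover have "vec n (\<lambda>a. \<Sum>m\<in>{..s i}. (\<lambda>m a. if a = i then monom (coeff p m) m else 0) m a) = vec n (\<lambda>a. if a = i then p else 0)"
    using poly_as_sum_of_monoms'[OF p] by (intro eq_vecI) auto
  ultimately show ?thesis by simp
qed

lemma reach_all:
  assumes y: "y \<in> carrier_vec n" and yd: "\<forall>a<n. degree (y $ a) \<le> s a"
  shows "reach n s d (y :: 'a::field poly vec)"
proof -
  have "reach n s d (vec n (\<lambda>a. \<Sum>i\<in>{..<n}. (\<lambda>i a. if a = i then y $ i else 0) i a) :: 'a poly vec)"
  proof (rule reach_sum)
    fix i assume "i \<in> {..<n}"
    then show "reach n s d (vec n ((\<lambda>i a. if a = i then y $ i else 0) i) :: 'a poly vec)"
      using yd by (intro reach_row) auto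
  qed simp
  moreover have "vec n (\<lambda>a. \<Sum>i\<in>{..<n}. (\<lambda>i a. if a = i then y $ i else 0) i a) = y"
    using y by (intro eq_vecI) auto
  ultimately show ?thesis by simp
qed




lemma sum_split_add: "(\<Sum>j<(a::nat)+b. f j) = (\<Sum>j<a. f j) + (\<Sum>j<b. f (j + a))"
proof -
  have "(\<Sum>j<a+b. f j) = (\<Sum>j\<in>{..<a} \<union> {a..<a+b}. f j)"
    by (intro sum.cong) auto
  also have "\<dots> = (\<Sum>j<a. f j) + (\<Sum>j\<in>{a..<a+b}. f j)" by (intro sum.union_disjoint) auto
  also have "(\<Sum>j\<in>{a..<a+b}. f j) = (\<Sum>j<b. f (j + a))"
    using sum.shift_bounds_nat_ivl[of f 0 a b] by (simp add: add.commute atLeast0LessThan)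
  finally show ?thesis .
qed

lemma hcat_mult_vec:
  fixes A B :: "'a::comm_ring_1 mat"
  assumes A: "A \<in> carrier_mat m a" and B: "B \<in> carrier_mat m b" and w: "w \<in> carrier_vec (a+b)"
  shows "hcat A B *\<^sub>v w = A *\<^sub>v vec a (\<lambda>j. w $ j) + B *\<^sub>v vec b (\<lambda>j. w $ (j + a))"
proof (rule eq_vecI)
  show "dim_vec (hcat A B *\<^sub>v w) = dim_vec (A *\<^sub>v vec a (\<lambda>j. w $ j) + B *\<^sub>v vec b (\<lambda>j. w $ (j + a)))"
    using A B by (simp add: hcat_def)
  fix i assume "i < dim_vec (A *\<^sub>v vec a (\<lambda>j. w $ j) + B *\<^sub>v vec b (\<lambda>j. w $ (j + a)))"
  then have i: "i < m" using A B by simp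
  have hc: "hcat A B \<in> carrier_mat m (a+b)" using A B by (simp add: hcat_def)
  have "(hcat A B *\<^sub>v w) $ i = (\<Sum>j<a+b. hcat A B $$ (i,j) * w $ j)"
    using mat_vec_entry[of i "hcat A B" w] hc w i by simp
  also have "\<dots> = (\<Sum>j<a. A $$ (i,j) * w $ j) + (\<Sum>j<b. B $$ (i,j) * w $ (j + a))"
    unfolding sum_split_add using A B i by (simp add: hcat_def)
  also have "\<dots> = (A *\<^sub>v vec a (\<lambda>j. w $ j)) $ i + (B *\<^sub>v vec b (\<lambda>j. w $ (j + a))) $ i"
    using mat_vec_entry[of i A "vec a (\<lambda>j. w $ j)"] mat_vec_entry[of i B "vec b (\<lambda>j. w $ (j + a))"] A B i
    by simp
  finally show "(hcat A B *\<^sub>v w) $ i = (A *\<^sub>v vec a (\<lambda>j. w $ j) + B *\<^sub>v vec b (\<lambda>j. w $ (j + a))) $ i"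
    using A B i by simp
qed

lemma unimod_inv:
  fixes U :: "'a::field poly mat"
  assumes U: "U \<in> carrier_mat n n" and u: "is_unit (det U)"
  shows "\<exists>V \<in> carrier_mat n n. U * V = 1\<^sub>m n"
proof -
  from u obtain k where k: "1 = det U * k" by (auto elim!: dvdE)
  define V where "V = k \<cdot>\<^sub>m adj_mat U"
  have V: "V \<in> carrier_mat n n" unfolding V_def using adj_mat[OF U] by simp
  have "U * V = k \<cdot>\<^sub>m (U * adj_mat U)" unfolding V_def using mult_smult_distrib[OF U] adj_mat[OF U] by simp
  also have "\<dots> = k \<cdot>\<^sub>m (det U \<cdot>\<^sub>m 1\<^sub>m n)" using adj_mat[OF U] by simp
  also have "\<dots> = 1\<^sub>m n" using k by (intro eq_matI) (auto simp: mult.commute)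
  finally show ?thesis using V by blast
qed

lemma det_nz_full_rank:
  fixes A :: "'a::idom mat"
  assumes A: "A \<in> carrier_mat n n" and d: "det A \<noteq> 0"
  shows "full_col_rank A"
  unfolding full_col_rank_def
proof (intro ballI impI)
  fix x assume x: "x \<in> carrier_vec (dim_col A)" and z: "A *\<^sub>v x = 0\<^sub>v (dim_row A)"
  have x': "x \<in> carrier_vec n" using x A by simp
  have "det A \<cdot>\<^sub>v x = det A \<cdot>\<^sub>v (1\<^sub>m n *\<^sub>v x)" using x' by auto
  also have "\<dots> = (det A \<cdot>\<^sub>m 1\<^sub>m n) *\<^sub>v x" using A x' by auto
  also have "\<dots> = (adj_mat A * A) *\<^sub>v x" using adj_mat[OF A] by simp
  also have "\<dots> = adj_mat A *\<^sub>v (A *\<^sub>v x)" using adj_mat[OF A] A x' by (metis assoc_mult_mat_vec)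
  also have "\<dots> = 0\<^sub>v n" using z A adj_mat[OF A] mat_vec_zero[of "adj_mat A"] by simp
  finally have "det A \<cdot>\<^sub>v x = 0\<^sub>v n" .
  then show "x = 0\<^sub>v (dim_col A)"
  proof (intro eq_vecI)
    fix i assume "det A \<cdot>\<^sub>v x = 0\<^sub>v n" "i < dim_vec (0\<^sub>v (dim_col A))"
    then have "(det A \<cdot>\<^sub>v x) $ i = 0" "i < n" using A by auto
    then show "x $ i = 0\<^sub>v (dim_col A) $ i" using d x' A by simp
  qed (use x' A in simp)
qed

lemma herm_lb:
  fixes H :: "'a::field poly mat"
  assumes H: "H \<in> carrier_mat n n" and up: "\<forall>i<n. \<forall>j<n. i < j \<longrightarrow> H $$ (i,j) = 0"
    and dg: "\<forall>i<n. H $$ (i,i) \<noteq> 0" and c: "c \<in> carrier_vec n" and cn: "c \<noteq> 0\<^sub>v n"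
  shows "\<exists>i<n. (H *\<^sub>v c) $ i \<noteq> 0 \<and> degree (H $$ (i,i)) \<le> degree ((H *\<^sub>v c) $ i)"
proof -
  have ex: "\<exists>i. i < n \<and> c $ i \<noteq> 0"
  proof (rule ccontr)
    assume "\<not> ?thesis"
    then have "c = 0\<^sub>v n" using c by (intro eq_vecI) auto
    then show False using cn by simp
  qed
  define i0 where "i0 = (LEAST i. i < n \<and> c $ i \<noteq> 0)"
  have i0: "i0 < n" "c $ i0 \<noteq> 0" using LeastI_ex[OF ex] unfolding i0_def by auto
  have lt: "c $ j = 0" if "j < i0" for j
    using not_less_Least[of j "\<lambda>i. i < n \<and> c $ i \<noteq> 0"] that i0 unfolding i0_def by auto
  have "(H *\<^sub>v c) $ i0 = (\<Sum>j<n. H $$ (i0,j) * c $ j)"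
    using mat_vec_entry[of i0 H c] H c i0 by simp
  also have "\<dots> = (\<Sum>j<n. if j = i0 then H $$ (i0,i0) * c $ i0 else 0)"
  proof (rule sum.cong[OF refl])
    fix j assume j: "j \<in> {..<n}"
    show "H $$ (i0,j) * c $ j = (if j = i0 then H $$ (i0,i0) * c $ i0 else 0)"
      using lt[of j] up i0 j by (cases "j < i0"; cases "j = i0") auto
  qed
  also have "\<dots> = H $$ (i0,i0) * c $ i0" using i0 by simp
  finally have e: "(H *\<^sub>v c) $ i0 = H $$ (i0,i0) * c $ i0" .
  have nz: "H $$ (i0,i0) * c $ i0 \<noteq> 0" using dg i0 by simp
  have "degree (H $$ (i0,i0) * c $ i0) = degree (H $$ (i0,i0)) + degree (c $ i0)"
    using dg i0 by (intro degree_mult_eq) auto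
  then show ?thesis using e nz i0 by (intro exI[of _ i0]) auto
qed




lemma s_star_le:
  assumes "k < n + (\<Sum>i<n. s i div d)" "0 < d" shows "s_star n s d k \<le> int d"
proof -
  let ?L = "concat (map (\<lambda>i. int (s i mod d) # replicate (s i div d) (int d)) [0..<n])"
  have L: "length ?L = n + (\<Sum>i<n. s i div d)" by (induct n) auto
  have "?L ! k \<in> set ?L" using assms L by (intro nth_mem) simp
  moreover have "x \<le> int d" if x: "x \<in> set ?L" for x
  proof -
    from x obtain i where "x \<in> set (int (s i mod d) # replicate (s i div d) (int d))" by auto
    then have "x = int (s i mod d) \<or> x = int d" by (auto split: if_splits)
    moreover have "s i mod d < d" using assms(2) by simp
    ultimately show ?thesis by linarith
  qed
  ultimately show ?thesis unfolding s_star_def by blast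
qed

lemma col_as_mult:
  fixes A :: "'a::comm_ring_1 mat"
  assumes A: "A \<in> carrier_mat nr nc" and j: "j < nc"
  shows "col A j = A *\<^sub>v unit_vec nc j"
proof (rule eq_vecI)
  have dA: "dim_row A = nr" "dim_col A = nc" using A by auto
  show "dim_vec (col A j) = dim_vec (A *\<^sub>v unit_vec nc j)" using dA by simp
  fix i assume "i < dim_vec (A *\<^sub>v unit_vec nc j)"
  then have i: "i < nr" using dA by simp
  have "(A *\<^sub>v unit_vec nc j) $ i = row A i \<bullet> unit_vec nc j" using i dA by simp
  also have "\<dots> = row A i $ j" by (rule scalar_prod_right_unit[OF j])
  also have "\<dots> = A $$ (i,j)" using i j dA by simp
  also have "\<dots> = col A j $ i" using i j dA by simp
  finally show "col A j $ i = (A *\<^sub>v unit_vec nc j) $ i" by simp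
qed

theorem mainTheorem4:
  fixes F H Q R N :: "'a::field poly mat" and n :: nat
  defines "d \<equiv> dmax F"
      and "s \<equiv> \<lambda>i. degree (H $$ (i,i))"
  defines "E \<equiv> E_mat n s d :: 'a poly mat"
      and "nbar \<equiv> n + (\<Sum>i<n. s i div d)"
  assumes F_carrier: "F \<in> carrier_mat n n"
      and F_nonsing: "nonsingular F"
      and F_red: "col_reduced F"
      and H_hnf: "is_hermite_nf F H"
      and H_carrier: "H \<in> carrier_mat n n"
      and QR_carrier: "Q \<in> carrier_mat n nbar" "R \<in> carrier_mat n nbar"
      and E_eq: "E = F * Q + R"
      and R_deg: "\<forall>i < n. \<forall>j < nbar. R $$ (i,j) \<noteq> 0 \<longrightarrow> degree (R $$ (i,j)) < d"
      and N_min: "minimal_kernel_basis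
                    (\<lambda>i. if i < n then - 2 * int d else - s_star n s d (i - n))
                    (hcat F (- R)) N"
  shows "column_basis (E * select_cols (\<lambda>v. cdeg_le (\<lambda>i. - s_star n s d i) v 0) (bottom_rows n N)) H
       \<and> (\<forall>j < dim_col (E * select_cols (\<lambda>v. cdeg_le (\<lambda>i. - s_star n s d i) v 0) (bottom_rows n N)).
            col (E * select_cols (\<lambda>v. cdeg_le (\<lambda>i. - s_star n s d i) v 0) (bottom_rows n N)) j \<noteq> 0\<^sub>v n
            \<longrightarrow> cdeg (\<lambda>i. - int (s i)) (col (E * select_cols (\<lambda>v. cdeg_le (\<lambda>i. - s_star n s d i) v 0) (bottom_rows n N)) j) = 0)"
proof -
  define t where "t = (\<lambda>i. if i < n then - 2 * int d else - s_star n s d (i - n))"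
  define P where "P = (\<lambda>v::'a poly vec. cdeg_le (\<lambda>i. - s_star n s d i) v 0)"
  define Nd where "Nd = bottom_rows n N"
  define J where "J = filter (\<lambda>j. P (col Nd j)) [0..<dim_col Nd]"
  define Nb where "Nb = select_cols P Nd"
  define m where "m = dim_col N"
  define M where "M = hcat F (- R)"
  have mk: "minimal_kernel_basis t M N" using N_min unfolding t_def M_def .
  have mk2: "right_kernel_basis M N \<and> shifted_col_reduced t N" using mk unfolding minimal_kernel_basis_def .
  have RK: "right_kernel_basis M N" using mk2 by (rule conjunct1)
  have redN: "shifted_col_reduced t N" using mk2 by (rule conjunct2)
  have RKd: "dim_row N = dim_col M \<and> full_col_rank N \<and>
     M * N = 0\<^sub>m (dim_row M) (dim_col N) \<and>
     (\<forall>q \<in> carrier_vec (dim_col M). M *\<^sub>v q = 0\<^sub>v (dim_row M) \<longrightarrow>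
        (\<exists>c \<in> carrier_vec (dim_col N). q = N *\<^sub>v c))" using RK unfolding right_kernel_basis_def .
  have Qc: "Q \<in> carrier_mat n nbar" using QR_carrier(1) .
  have Rc: "R \<in> carrier_mat n nbar" using QR_carrier(2) .
  have mRc: "- R \<in> carrier_mat n nbar" using Rc by (rule uminus_carrier_mat)
  have Mc: "M \<in> carrier_mat n (n + nbar)"
  proof -
    have dF: "dim_row F = n" "dim_col F = n" using carrier_matD[OF F_carrier] by blast+
    have dR: "dim_col R = nbar" using carrier_matD[OF Rc] by blast
    have "dim_row M = dim_row F" unfolding M_def hcat_def by (simp only: dim_row_mat)
    moreover have "dim_col M = dim_col F + dim_col (- R)" unfolding M_def hcat_def by (simp only: dim_col_mat)
    ultimately show ?thesis using dF dR by (intro carrier_matI) (simp_all only: index_uminus_mat)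
  qed
  have RK1: "dim_row N = dim_col M" using RKd by (rule conjunct1)
  have MN0: "M * N = 0\<^sub>m (dim_row M) (dim_col N)" using RKd by (elim conjE)
  have RKq: "\<forall>q \<in> carrier_vec (dim_col M). M *\<^sub>v q = 0\<^sub>v (dim_row M) \<longrightarrow>
        (\<exists>c \<in> carrier_vec (dim_col N). q = N *\<^sub>v c)" using RKd by (elim conjE)
  have Nc: "N \<in> carrier_mat (n + nbar) m" using RK1 Mc unfolding m_def carrier_mat_def by simp
  have MN: "M * N = 0\<^sub>m n m" using MN0 Mc unfolding m_def carrier_mat_def by simp
  have Ndc: "Nd \<in> carrier_mat nbar m" unfolding Nd_def bottom_rows_def using Nc by simp
  have Nd_ent: "Nd $$ (i,l) = N $$ (i+n, l)" if "i < nbar" "l < m" for i l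
    unfolding Nd_def bottom_rows_def using Nc that by simp
  have lenJ: "J = filter (\<lambda>j. P (col Nd j)) [0..<m]" unfolding J_def using Ndc by simp
  have Nbc: "Nb \<in> carrier_mat nbar (length J)"
    unfolding Nb_def select_cols_def J_def using Ndc by (simp add: Let_def)
  have Nb_ent: "Nb $$ (i,k) = Nd $$ (i, J ! k)" if "i < nbar" "k < length J" for i k
    unfolding Nb_def select_cols_def using Ndc that unfolding J_def by (simp add: Let_def)
  have Jk: "J ! k < m \<and> P (col Nd (J ! k))" if "k < length J" for k
  proof -
    have "J ! k \<in> set J" using that by simp
    then show ?thesis unfolding lenJ by simp
  qed
  have Ec: "E \<in> carrier_mat n nbar" unfolding E_def nbar_def by (rule E_mat_carrier)
  obtain U where U: "unimodular U" "dim_row U = dim_col F" "H = F * U"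
    using H_hnf unfolding is_hermite_nf_def by blast
  have Uc: "U \<in> carrier_mat n n"
  proof -
    have "U \<in> carrier_mat (dim_row U) (dim_row U)" using U(1) unfolding unimodular_def by blast
    then show ?thesis using U(2) F_carrier by simp
  qed
  obtain V where Vc: "V \<in> carrier_mat n n" and UV: "U * V = 1\<^sub>m n"
    using unimod_inv[OF Uc] U(1) unfolding unimodular_def by auto
  have FHV: "F = H * V"
  proof -
    have "H * V = F * (U * V)" using U(3) F_carrier Uc Vc by simp
    also have "\<dots> = F" using UV F_carrier by simp
    finally show ?thesis by simp
  qed
  have ker: "F *\<^sub>v vec n (\<lambda>j. w $ j) = R *\<^sub>v vec nbar (\<lambda>j. w $ (j + n))"
    if w: "w \<in> carrier_vec (n + nbar)" and Mw: "M *\<^sub>v w = 0\<^sub>v n" for w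
  proof -
    let ?u = "vec n (\<lambda>j. w $ j)" and ?v = "vec nbar (\<lambda>j. w $ (j + n))"
    have "M *\<^sub>v w = F *\<^sub>v ?u + (- R) *\<^sub>v ?v"
      unfolding M_def by (rule hcat_mult_vec[OF F_carrier mRc w])
    also have "(- R) *\<^sub>v ?v = - (R *\<^sub>v ?v)" using Rc by simp
    finally have e: "F *\<^sub>v ?u + - (R *\<^sub>v ?v) = 0\<^sub>v n" using Mw by simp
    show ?thesis
    proof (rule eq_vecI)
      fix i assume "i < dim_vec (R *\<^sub>v ?v)"
      then have i: "i < n" using Rc by simp
      have "(F *\<^sub>v ?u + - (R *\<^sub>v ?v)) $ i = 0" using e i by simp
      then show "(F *\<^sub>v ?u) $ i = (R *\<^sub>v ?v) $ i" using i F_carrier Rc by simp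
    qed (use F_carrier Rc in simp)
  qed
  have latt: "E *\<^sub>v v = H *\<^sub>v (V *\<^sub>v (Q *\<^sub>v v + u))"
    if v: "v \<in> carrier_vec nbar" and u: "u \<in> carrier_vec n" and Fu: "F *\<^sub>v u = R *\<^sub>v v" for v u
  proof -
    have "E *\<^sub>v v = (F * Q) *\<^sub>v v + R *\<^sub>v v"
      unfolding E_eq using F_carrier Qc Rc v by (intro add_mult_distrib_mat_vec) auto
    also have "(F * Q) *\<^sub>v v = F *\<^sub>v (Q *\<^sub>v v)" using F_carrier Qc v by simp
    also have "F *\<^sub>v (Q *\<^sub>v v) + R *\<^sub>v v = F *\<^sub>v (Q *\<^sub>v v + u)"
      unfolding Fu[symmetric] using F_carrier Qc v u by (simp add: mult_add_distrib_mat_vec)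
    also have "F *\<^sub>v (Q *\<^sub>v v + u) = H *\<^sub>v (V *\<^sub>v (Q *\<^sub>v v + u))"
      unfolding FHV using H_carrier Vc Qc v u by simp
    finally show ?thesis .
  qed
  define S where "S = mat m (length J) (\<lambda>(l,k). if l = J ! k then 1 else (0::'a poly))"
  have Sc: "S \<in> carrier_mat m (length J)" unfolding S_def by simp
  have NbS: "Nb = Nd * S"
  proof (rule eq_matI)
    fix i k assume ik: "i < dim_row (Nd * S)" "k < dim_col (Nd * S)"
    then have i: "i < nbar" and k: "k < length J" using Ndc Sc by auto
    have "(Nd * S) $$ (i,k) = (\<Sum>l<m. Nd $$ (i,l) * S $$ (l,k))"
      using i k Ndc Sc by (simp add: scalar_prod_def atLeast0LessThan)
    also have "\<dots> = (\<Sum>l<m. if l = J ! k then Nd $$ (i, J ! k) else 0)"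
      using k unfolding S_def by (intro sum.cong) auto
    also have "\<dots> = Nd $$ (i, J ! k)" using Jk[OF k] by simp
    finally show "Nb $$ (i,k) = (Nd * S) $$ (i,k)" using Nb_ent[OF i k] by simp
  qed (use Nbc Ndc Sc in auto)
  have A3: "\<exists>c' \<in> carrier_vec n. (E * Nb) *\<^sub>v c = H *\<^sub>v c'" if c: "c \<in> carrier_vec (length J)" for c
  proof -
    define c0 where "c0 = S *\<^sub>v c"
    have c0: "c0 \<in> carrier_vec m" unfolding c0_def using Sc c by simp
    define w where "w = N *\<^sub>v c0"
    have w: "w \<in> carrier_vec (n + nbar)" unfolding w_def using Nc c0 by simp
    have Mw: "M *\<^sub>v w = 0\<^sub>v n"
    proof -
      have "M *\<^sub>v w = (M * N) *\<^sub>v c0" unfolding w_def using Mc Nc c0 by simp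
      also have "\<dots> = 0\<^sub>v n" unfolding MN using c0 by (intro eq_vecI) auto
      finally show ?thesis .
    qed
    have vN: "vec nbar (\<lambda>j. w $ (j + n)) = Nd *\<^sub>v c0"
    proof (rule eq_vecI)
      fix i assume "i < dim_vec (Nd *\<^sub>v c0)"
      then have i: "i < nbar" using Ndc by simp
      have "(Nd *\<^sub>v c0) $ i = (\<Sum>l<m. Nd $$ (i,l) * c0 $ l)"
        using mat_vec_entry[of i Nd c0] i Ndc c0 by simp
      also have "\<dots> = (\<Sum>l<m. N $$ (i + n,l) * c0 $ l)" using Nd_ent i by simp
      also have "\<dots> = w $ (i + n)" unfolding w_def using mat_vec_entry[of "i+n" N c0] i Nc c0 by simp
      finally show "vec nbar (\<lambda>j. w $ (j + n)) $ i = (Nd *\<^sub>v c0) $ i" using i by simp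
    qed (use Ndc in simp)
    have Fu: "F *\<^sub>v vec n (\<lambda>j. w $ j) = R *\<^sub>v (Nd *\<^sub>v c0)" using ker[OF w Mw] vN by simp
    have "(E * Nb) *\<^sub>v c = E *\<^sub>v (Nd *\<^sub>v c0)"
    proof -
      have NSc: "Nd * S \<in> carrier_mat nbar (length J)" using Ndc Sc by simp
      have "(E * (Nd * S)) *\<^sub>v c = E *\<^sub>v ((Nd * S) *\<^sub>v c)" by (rule assoc_mult_mat_vec[OF Ec NSc c])
      also have "(Nd * S) *\<^sub>v c = Nd *\<^sub>v (S *\<^sub>v c)" by (rule assoc_mult_mat_vec[OF Ndc Sc c])
      finally show ?thesis unfolding c0_def NbS .
    qed
    also have "\<dots> = H *\<^sub>v (V *\<^sub>v (Q *\<^sub>v (Nd *\<^sub>v c0) + vec n (\<lambda>j. w $ j)))"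
      by (rule latt[OF _ _ Fu]) (use Ndc c0 in auto)
    finally show ?thesis using Vc Qc Ndc c0 by (intro bexI[of _ "V *\<^sub>v (Q *\<^sub>v (Nd *\<^sub>v c0) + vec n (\<lambda>j. w $ j))"]) auto
  qed
  have Hup: "\<forall>i<n. \<forall>j<n. i < j \<longrightarrow> H $$ (i,j) = 0"
    using H_hnf H_carrier unfolding is_hermite_nf_def by auto
  have Hdg: "\<forall>i<n. H $$ (i,i) \<noteq> 0"
    using H_hnf H_carrier unfolding is_hermite_nf_def by fastforce
  have Hlow: "\<forall>i<n. \<forall>j<i. H $$ (i,j) \<noteq> 0 \<longrightarrow> degree (H $$ (i,j)) < degree (H $$ (i,i))"
    using H_hnf H_carrier unfolding is_hermite_nf_def by auto
  have redF: "shifted_col_reduced (\<lambda>_. 0) F" using F_red unfolding col_reduced_def .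
  have cdF: "0 \<le> cdeg (\<lambda>_. 0) (col F i)" if i: "i < n" for i
  proof -
    obtain r where r: "r < dim_row F" "F $$ (r,i) \<noteq> 0" using red_col_nonzero[OF redF] i F_carrier by auto
    have "int (degree (col F i $ r)) + 0 \<le> cdeg (\<lambda>_. 0) (col F i)"
      using cdeg_ge[of r "col F i" "\<lambda>_. 0"] r i F_carrier by simp
    then show ?thesis by simp
  qed
  have A4: "\<exists>a \<in> carrier_vec (length J). (E * Nb) *\<^sub>v a = col H j" if j: "j < n" for j
  proof -
    define y where "y = col H j"
    have y: "y \<in> carrier_vec n" unfolding y_def carrier_vec_def using H_carrier by simp
    have yd: "\<forall>a<n. degree (y $ a) \<le> s a"
    proof (intro allI impI)
      fix a assume a: "a < n"
      have ya: "y $ a = H $$ (a,j)" unfolding y_def using a j H_carrier by simp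
      show "degree (y $ a) \<le> s a"
      proof (cases "a < j")
        case True then show ?thesis using Hup a j ya by simp
      next
        case False
        show ?thesis
        proof (cases "a = j")
          case True then show ?thesis using ya unfolding s_def by simp
        next
          case False
          then have "j < a" using \<open>\<not> a < j\<close> by simp
          then show ?thesis using Hlow a ya unfolding s_def
            by (cases "H $$ (a,j) = 0") (auto intro: less_imp_le)
        qed
      qed
    qed
    have "reach n s d y" by (rule reach_all[OF y yd])
    then obtain v where v: "v \<in> carrier_vec nbar" and Ev: "E *\<^sub>v v = y"
      and vd: "\<forall>k<nbar. int (degree (v $ k)) \<le> s_star n s d k"
      unfolding reach_def E_def nbar_def by blast
    define u where "u = U *\<^sub>v unit_vec n j - Q *\<^sub>v v"
    have u: "u \<in> carrier_vec n" unfolding u_def using Uc Qc v by simp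
    have Fu: "F *\<^sub>v u = R *\<^sub>v v"
    proof -
      have "F *\<^sub>v u = F *\<^sub>v (U *\<^sub>v unit_vec n j) - F *\<^sub>v (Q *\<^sub>v v)"
        unfolding u_def using F_carrier Uc Qc v by (intro mult_minus_distrib_mat_vec) auto
      also have "F *\<^sub>v (U *\<^sub>v unit_vec n j) = y"
        unfolding y_def U(3) using F_carrier Uc j by (simp add: col_as_mult[of _ n n])
      also have "F *\<^sub>v (Q *\<^sub>v v) = (F * Q) *\<^sub>v v" using F_carrier Qc v by simp
      also have "y = (F * Q) *\<^sub>v v + R *\<^sub>v v"
        unfolding Ev[symmetric] E_eq using F_carrier Qc Rc v by (intro add_mult_distrib_mat_vec) auto
      finally show ?thesis
        using F_carrier Qc Rc v by (intro eq_vecI) auto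
    qed
    have Rb: "cdeg_le (\<lambda>_. 0) (R *\<^sub>v v) (2 * int d - 1)"
      unfolding cdeg_le_def
    proof (intro allI impI)
      fix i assume i: "i < dim_vec (R *\<^sub>v v)" and nz: "(R *\<^sub>v v) $ i \<noteq> 0"
      then have i': "i < n" using Rc by simp
      have Rv: "(R *\<^sub>v v) $ i = (\<Sum>k<nbar. R $$ (i,k) * v $ k)"
        using mat_vec_entry[of i R v] i' Rc v by simp
      show "int (degree ((R *\<^sub>v v) $ i)) + 0 \<le> 2 * int d - 1"
      proof (cases "d = 0")
        case True
        then have "\<And>k. k < nbar \<Longrightarrow> R $$ (i,k) = 0" using R_deg i' by auto
        then have "(R *\<^sub>v v) $ i = 0" unfolding Rv by simp
        then show ?thesis using nz by simp
      next
        case False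
        then have d0: "0 < d" by simp
        have "degree ((R *\<^sub>v v) $ i) \<le> 2 * d - 1" unfolding Rv
        proof (rule degree_sum_le)
          fix k assume "k \<in> {..<nbar}"
          then have k: "k < nbar" by simp
          show "degree (R $$ (i,k) * v $ k) \<le> 2 * d - 1"
          proof (cases "R $$ (i,k) = 0")
            case True then show ?thesis by simp
          next
            case False
            then have r: "degree (R $$ (i,k)) < d" using R_deg i' k by auto
            have "int (degree (v $ k)) \<le> int d"
              using vd k s_star_le[of k n s d] d0 unfolding nbar_def by force
            then have "degree (v $ k) \<le> d" by simp
            then show ?thesis using r degree_mult_le[of "R $$ (i,k)" "v $ k"] by linarith
          qed
        qed simp
        then show ?thesis using d0 by linarith
      qed
    qed
    have ub: "int (degree (u $ i)) \<le> 2 * int d - 1" if i: "i < n" "u $ i \<noteq> 0" for i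
    proof -
      have "cdeg_le (\<lambda>_. 0) (F *\<^sub>v u) (2 * int d - 1)" using Rb Fu by simp
      from pred_deg[OF redF _ this, of i] i u F_carrier
      have "int (degree (u $ i)) + cdeg (\<lambda>_. 0) (col F i) \<le> 2 * int d - 1" by simp
      then show ?thesis using cdF[OF i(1)] by linarith
    qed
    define w where "w = vec (n + nbar) (\<lambda>k. if k < n then u $ k else v $ (k - n))"
    have w: "w \<in> carrier_vec (n + nbar)" unfolding w_def by simp
    have wu: "vec n (\<lambda>k. w $ k) = u" unfolding w_def using u by (intro eq_vecI) auto
    have wv: "vec nbar (\<lambda>k. w $ (k + n)) = v" unfolding w_def using v by (intro eq_vecI) auto
    have Mw: "M *\<^sub>v w = 0\<^sub>v n"
    proof -
      have "M *\<^sub>v w = F *\<^sub>v u + (- R) *\<^sub>v v"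
        unfolding M_def using hcat_mult_vec[OF F_carrier mRc w] wu wv by simp
      also have "(- R) *\<^sub>v v = - (R *\<^sub>v v)" using Rc v by simp
      finally show ?thesis unfolding Fu using Rc v by (intro eq_vecI) auto
    qed
    have wM: "w \<in> carrier_vec (dim_col M)" using w Mc by simp
    have MwM: "M *\<^sub>v w = 0\<^sub>v (dim_row M)" using Mw Mc by simp
    obtain c where c0: "c \<in> carrier_vec (dim_col N)" and wc: "w = N *\<^sub>v c"
      using RKq[rule_format, OF wM MwM] by (elim bexE)
    have c: "c \<in> carrier_vec m" using c0 unfolding m_def .
    have wt: "cdeg_le t (N *\<^sub>v c) 0"
      unfolding wc[symmetric] cdeg_le_def
    proof (intro allI impI)
      fix k assume k: "k < dim_vec w" and nz: "w $ k \<noteq> 0"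
      show "int (degree (w $ k)) + t k \<le> 0"
      proof (cases "k < n")
        case True
        then have "w $ k = u $ k" unfolding w_def by simp
        then show ?thesis using ub[OF True] nz True unfolding t_def by simp
      next
        case False
        then have kk: "k - n < nbar" "w $ k = v $ (k - n)" using k unfolding w_def by auto
        then show ?thesis using vd False unfolding t_def by simp
      qed
    qed
    have cN: "c \<in> carrier_vec (dim_col N)" using c unfolding m_def by simp
    have Psel: "P (col Nd l)" if l: "l < m" and cl: "c $ l \<noteq> 0" for l
    proof -
      have b: "int (degree (c $ l)) + cdeg t (col N l) \<le> 0"
        using pred_deg[OF redN cN wt] l cl unfolding m_def by simp
      show ?thesis unfolding P_def cdeg_le_def
      proof (intro allI impI)
        fix i assume i: "i < dim_vec (col Nd l)" and nz: "col Nd l $ i \<noteq> 0"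
        then have i': "i < nbar" using Ndc by simp
        have e: "col Nd l $ i = N $$ (i + n, l)" using Nd_ent[OF i' l] i' l Ndc by simp
        have "int (degree (col N l $ (i+n))) + t (i+n) \<le> cdeg t (col N l)"
          using cdeg_ge[of "i+n" "col N l" t] Nc i' l nz e by simp
        then show "int (degree (col Nd l $ i)) + - s_star n s d i \<le> 0"
          using b e Nc i' l unfolding t_def by simp
      qed
    qed
    define a where "a = vec (length J) (\<lambda>k. c $ (J ! k))"
    have ac: "a \<in> carrier_vec (length J)" unfolding a_def by simp
    have Nba: "Nb *\<^sub>v a = v"
    proof (rule eq_vecI)
      fix i assume "i < dim_vec v"
      then have i: "i < nbar" using v by simp
      have "(Nb *\<^sub>v a) $ i = (\<Sum>k<length J. Nd $$ (i, J ! k) * c $ (J ! k))"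
        using mat_vec_entry[of i Nb a] i Nbc ac Nb_ent[OF i] unfolding a_def by simp
      also have "\<dots> = (\<Sum>l\<in>set J. Nd $$ (i, l) * c $ l)"
      proof -
        have dJ: "distinct J" unfolding lenJ by simp
        have "bij_betw ((!) J) {..<length J} (set J)" by (rule bij_betw_nth[OF dJ refl refl])
        then show ?thesis by (rule sum.reindex_bij_betw)
      qed
      also have "\<dots> = (\<Sum>l<m. Nd $$ (i, l) * c $ l)"
      proof (rule sum.mono_neutral_left)
        show "set J \<subseteq> {..<m}" unfolding lenJ by auto
        show "\<forall>l\<in>{..<m} - set J. Nd $$ (i, l) * c $ l = 0"
          using Psel unfolding lenJ by auto
      qed simp
      also have "\<dots> = (\<Sum>l<m. N $$ (i + n, l) * c $ l)" using Nd_ent i by simp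
      also have "\<dots> = w $ (i + n)" unfolding wc using mat_vec_entry[of "i+n" N c] i Nc c by simp
      also have "\<dots> = v $ i" unfolding w_def using i by simp
      finally show "(Nb *\<^sub>v a) $ i = v $ i" .
    qed (use Nbc v in simp)
    have "(E * Nb) *\<^sub>v a = E *\<^sub>v (Nb *\<^sub>v a)" by (rule assoc_mult_mat_vec[OF Ec Nbc ac])
    then have "(E * Nb) *\<^sub>v a = col H j" using Nba Ev unfolding y_def by simp
    then show ?thesis using ac by blast
  qed
  have ENc: "E * Nb \<in> carrier_mat n (length J)" using Ec Nbc by simp
  have CB: "column_basis (E * Nb) H"
    unfolding column_basis_def
  proof (intro conjI)
    show "dim_row H = dim_row (E * Nb)" using H_carrier Ec by simp
    have "det H = det F * det U" unfolding U(3) by (rule det_mult[OF F_carrier Uc])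
    moreover have "det F \<noteq> 0" using F_nonsing unfolding nonsingular_def by simp
    moreover have "det U \<noteq> 0" using U(1) unfolding unimodular_def by auto
    ultimately have "det H \<noteq> 0" by simp
    then show "full_col_rank H" by (rule det_nz_full_rank[OF H_carrier])
    show "\<forall>c\<in>carrier_vec (dim_col (E * Nb)). \<exists>c'\<in>carrier_vec (dim_col H). (E * Nb) *\<^sub>v c = H *\<^sub>v c'"
      using A3 Nbc H_carrier by simp
    show "\<forall>c'\<in>carrier_vec (dim_col H). \<exists>c\<in>carrier_vec (dim_col (E * Nb)). H *\<^sub>v c' = (E * Nb) *\<^sub>v c"
    proof
      fix c' :: "'a poly vec" assume c': "c' \<in> carrier_vec (dim_col H)"
      have "\<forall>j. \<exists>a. j < n \<longrightarrow> a \<in> carrier_vec (length J) \<and> (E * Nb) *\<^sub>v a = col H j"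
        using A4 by blast
      then obtain af where af: "\<And>j. j < n \<Longrightarrow> af j \<in> carrier_vec (length J) \<and> (E * Nb) *\<^sub>v af j = col H j"
        by metis
      define Aa where "Aa = mat (length J) n (\<lambda>(k,j). af j $ k)"
      have Aac: "Aa \<in> carrier_mat (length J) n" unfolding Aa_def by simp
      have HA: "H = (E * Nb) * Aa"
      proof (rule eq_matI)
        fix i j assume "i < dim_row ((E * Nb) * Aa)" "j < dim_col ((E * Nb) * Aa)"
        then have i: "i < n" and j: "j < n" using ENc Aac by auto
        have cA: "col Aa j = af j" unfolding Aa_def using af[OF j] j by (intro eq_vecI) auto
        have dX: "dim_row ((E * Nb) * Aa) = n" "dim_col ((E * Nb) * Aa) = n" using ENc Aac by auto
        have "((E * Nb) * Aa) $$ (i,j) = col ((E * Nb) * Aa) j $ i"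
          by (rule index_col[symmetric]) (use dX i j in auto)
        also have "col ((E * Nb) * Aa) j = (E * Nb) *\<^sub>v col Aa j" by (rule col_mult2[OF ENc Aac j])
        finally have "((E * Nb) * Aa) $$ (i,j) = ((E * Nb) *\<^sub>v col Aa j) $ i" .
        also have "\<dots> = col H j $ i" unfolding cA using af[OF j] by simp
        also have "\<dots> = H $$ (i,j)" using i j H_carrier by simp
        finally show "H $$ (i,j) = ((E * Nb) * Aa) $$ (i,j)" by simp
      qed (use H_carrier ENc Aac in auto)
      have c'': "c' \<in> carrier_vec n" using c' H_carrier by simp
      have "H *\<^sub>v c' = (E * Nb) *\<^sub>v (Aa *\<^sub>v c')"
        unfolding HA by (rule assoc_mult_mat_vec[OF ENc Aac c''])
      moreover have "Aa *\<^sub>v c' \<in> carrier_vec (dim_col (E * Nb))" using Aac Nbc c'' by simp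
      ultimately show "\<exists>c\<in>carrier_vec (dim_col (E * Nb)). H *\<^sub>v c' = (E * Nb) *\<^sub>v c" by blast
    qed
  qed
  have DG: "\<forall>j < dim_col (E * Nb). col (E * Nb) j \<noteq> 0\<^sub>v n \<longrightarrow> cdeg (\<lambda>i. - int (s i)) (col (E * Nb) j) = 0"
  proof (intro allI impI)
    fix j assume j: "j < dim_col (E * Nb)" and nz: "col (E * Nb) j \<noteq> 0\<^sub>v n"
    then have j': "j < length J" using Nbc by simp
    define y where "y = col (E * Nb) j"
    have yE: "y = E *\<^sub>v col Nb j" unfolding y_def by (rule col_mult2[OF Ec Nbc j'])
    have cNb: "col Nb j = col Nd (J ! j)"
      using Nbc Ndc j' Nb_ent Jk[OF j'] by (intro eq_vecI) auto
    have Pj: "P (col Nd (J ! j))" using Jk[OF j'] by simp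
    have cv: "col Nb j \<in> carrier_vec nbar" using Nbc j' unfolding carrier_vec_def by simp
    have nn: "\<And>i. i < dim_vec (col Nb j) \<Longrightarrow> 0 \<le> s_star n s d i"
      using s_star_nonneg Nbc unfolding nbar_def by simp
    have vd: "\<forall>k<nbar. int (degree (col Nb j $ k)) \<le> s_star n s d k"
      using Pj cdeg_le_nonneg_iff[of "col Nb j" "s_star n s d", OF nn] cv Nbc
      unfolding P_def cNb[symmetric] by simp
    have ub: "degree (y $ a) \<le> s a" if a: "a < n" for a
      unfolding yE E_def using E_deg[of "col Nb j" n s d a] cv vd a unfolding nbar_def by simp
    have y: "y \<in> carrier_vec n" unfolding y_def carrier_vec_def using Ec by simp
    have uc: "unit_vec (length J) j \<in> carrier_vec (length J)" by simp
    have yu: "(E * Nb) *\<^sub>v unit_vec (length J) j = y"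
      unfolding y_def by (rule col_as_mult[OF ENc j', symmetric])
    obtain c' where c': "c' \<in> carrier_vec n" and yH0: "(E * Nb) *\<^sub>v unit_vec (length J) j = H *\<^sub>v c'"
      using A3[OF uc] by blast
    have yH: "y = H *\<^sub>v c'" using yH0 yu by simp
    have c'nz: "c' \<noteq> 0\<^sub>v n"
    proof
      assume "c' = 0\<^sub>v n"
      then have "y = 0\<^sub>v n" unfolding yH using mat_vec_zero[of H] H_carrier by simp
      then show False using nz unfolding y_def by simp
    qed
    obtain i where i: "i < n" "y $ i \<noteq> 0" "degree (H $$ (i,i)) \<le> degree (y $ i)"
      using herm_lb[OF H_carrier Hup Hdg c' c'nz] yH by auto
    let ?S = "{int (degree (y $ i)) + - int (s i) |i. i < dim_vec y \<and> y $ i \<noteq> 0}"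
    have fin: "finite ?S" by (rule cdeg_finite)
    have mem: "int (degree (y $ i)) + - int (s i) \<in> ?S" using i y by auto
    have ge: "0 \<le> int (degree (y $ i)) + - int (s i)" using i(3) unfolding s_def by simp
    have le: "\<forall>x\<in>?S. x \<le> 0"
    proof
      fix x assume "x \<in> ?S"
      then obtain k where k: "x = int (degree (y $ k)) + - int (s k)" "k < dim_vec y" by blast
      have "k < n" using k(2) y by simp
      then have "degree (y $ k) \<le> s k" by (rule ub)
      then show "x \<le> 0" using k(1) by linarith
    qed
    have "Max ?S = 0"
    proof (rule antisym)
      have ne: "?S \<noteq> {}" using mem by blast
      show "Max ?S \<le> 0" using Max_le_iff[OF fin ne] le by blast
      show "0 \<le> Max ?S" using Max_ge[OF fin mem] ge by linarith
    qed
    then show "cdeg (\<lambda>i. - int (s i)) (col (E * Nb) j) = 0"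
      unfolding y_def[symmetric] cdeg_def .
  qed
  have "column_basis (E * Nb) H \<and> (\<forall>j < dim_col (E * Nb). col (E * Nb) j \<noteq> 0\<^sub>v n \<longrightarrow> cdeg (\<lambda>i. - int (s i)) (col (E * Nb) j) = 0)"
    using CB DG by blast
  then show ?thesis unfolding Nb_def Nd_def P_def .
qed

end
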